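(* For every $L\in\Omega$, $q\in\mathbb{R}^d$, bounded open $U\subseteq\mathbb{R}^d$ and $w,\xi\in H^1(U)$, $$\fint_U\big(L(Dw(x),x)-q\cdot Dw(x)\big)dx\leq2\fint_U\big(L(D\xi(x),x)-q\cdot D\xi(x)\big)dx-\mu(U,q,L)+2\Lambda\fint_U|Dw(x)-D\xi(x)|^2dx.$$
   Context: Fix $d\geq2$ and $\Lambda\ge1$. $\Omega$ is the set of functions $L:\mathbb{R}^d\times\mathbb{R}^d\to\mathbb{R}$, measurable in $x$ and continuous in $p$, with $\frac14|p_1-p_2|^2\leq\frac12L(p_1,x)+\frac12L(p_2,x)-L(\frac12p_1+\frac12p_2,x)\leq\frac\Lambda4|p_1-p_2|^2$ for all $p_1,p_2,x\in\mathbb{R}^d$. For bounded open $U$, $q\in\mathbb{R}^d$, $L\in\Omega$: $\mu(U,q,L):=\min\{\fint_U(L(Dw(x),x)-q\cdot Dw(x))dx: w\in H^1(U)\}$ (assumed finite). *)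

theory Defs
  imports "HOL-Analysis.Analysis"
begin

text \<open>Smooth (C-infinity) real functions: all iterated derivatives exist everywhere.\<close>
definition smooth_fun :: "('a::euclidean_space \<Rightarrow> real) \<Rightarrow> bool" where
  "smooth_fun f \<longleftrightarrow> (\<exists>F. f \<in> F \<and> (\<forall>g\<in>F. \<exists>G. (\<forall>x. (g has_derivative G x) (at x))
       \<and> (\<forall>i\<in>Basis. (\<lambda>x. G x i) \<in> F)))"

definition test_fun :: "'a::euclidean_space set \<Rightarrow> ('a \<Rightarrow> real) \<Rightarrow> bool" where
  "test_fun U \<phi> \<longleftrightarrow> smooth_fun \<phi> \<and> compact (closure {x. \<phi> x \<noteq> 0})
      \<and> closure {x. \<phi> x \<noteq> 0} \<subseteq> U"

definition H1 :: "'a::euclidean_space set \<Rightarrow> ('a \<Rightarrow> real) \<Rightarrow> ('a \<Rightarrow> 'a) \<Rightarrow> bool" where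
  "H1 U w G \<longleftrightarrow>
     set_borel_measurable lebesgue U w \<and> set_integrable lebesgue U (\<lambda>x. (w x)\<^sup>2) \<and>
     set_borel_measurable lebesgue U G \<and> set_integrable lebesgue U (\<lambda>x. (norm (G x))\<^sup>2) \<and>
     (\<forall>\<phi> \<phi>'. test_fun U \<phi> \<and> (\<forall>x. (\<phi> has_derivative \<phi>' x) (at x)) \<longrightarrow>
        (\<forall>i\<in>Basis. (LINT x:U|lebesgue. w x * \<phi>' x i) = - (LINT x:U|lebesgue. (G x \<bullet> i) * \<phi> x)))"

definition Omega :: "real \<Rightarrow> ('a::euclidean_space \<Rightarrow> 'a \<Rightarrow> real) set" where
  "Omega \<Lambda> = {L. (\<forall>p. (\<lambda>x. L p x) \<in> borel_measurable lebesgue) \<and> (\<forall>x. continuous_on UNIV (\<lambda>p. L p x)) \<and>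
     (\<forall>p1 p2 x. (1/4) * (norm (p1 - p2))\<^sup>2 \<le> (1/2) * L p1 x + (1/2) * L p2 x - L ((1/2) *\<^sub>R p1 + (1/2) *\<^sub>R p2) x
        \<and> (1/2) * L p1 x + (1/2) * L p2 x - L ((1/2) *\<^sub>R p1 + (1/2) *\<^sub>R p2) x \<le> (\<Lambda>/4) * (norm (p1 - p2))\<^sup>2)}"

definition avg :: "'a::euclidean_space set \<Rightarrow> ('a \<Rightarrow> real) \<Rightarrow> real" where
  "avg U f = (LINT x:U|lebesgue. f x) / measure lebesgue U"

definition energy_integrand :: "('a::euclidean_space \<Rightarrow> 'a \<Rightarrow> real) \<Rightarrow> 'a \<Rightarrow> ('a \<Rightarrow> 'a) \<Rightarrow> 'a \<Rightarrow> real" where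
  "energy_integrand L q G x = L (G x) x - q \<bullet> G x"

text \<open>Admissible (finite-energy) H^1 functions, and mu as the infimum (a minimum under the hypotheses).\<close>
definition admissible :: "'a::euclidean_space set \<Rightarrow> 'a \<Rightarrow> ('a \<Rightarrow> 'a \<Rightarrow> real) \<Rightarrow> ('a \<Rightarrow> 'a) \<Rightarrow> bool" where
  "admissible U q L G \<longleftrightarrow> (\<exists>w. H1 U w G) \<and> set_integrable lebesgue U (energy_integrand L q G)"

definition mu :: "'a::euclidean_space set \<Rightarrow> 'a \<Rightarrow> ('a \<Rightarrow> 'a \<Rightarrow> real) \<Rightarrow> real" where
  "mu U q L = Inf {avg U (energy_integrand L q G) | G. admissible U q L G}"

end

theory Submission
  imports Defs
begin


lemma floor_approx_lim:
  fixes y :: real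
  shows "(\<lambda>n. real_of_int \<lfloor>2^n * y\<rfloor> / 2^n) \<longlonglongrightarrow> y"
proof -
  have b: "\<bar>real_of_int \<lfloor>2^n * y\<rfloor> / 2^n - y\<bar> \<le> 1 / 2^n" for n :: nat
  proof -
    have p: "(0::real) < 2^n" by simp
    have e: "real_of_int \<lfloor>2^n * y\<rfloor> / 2^n - y = (real_of_int \<lfloor>2^n * y\<rfloor> - 2^n * y) / 2^n"
      using p by (simp add: diff_divide_distrib)
    have f: "\<bar>real_of_int \<lfloor>2^n * y\<rfloor> - 2^n * y\<bar> \<le> 1"
      using of_int_floor_le[of "2^n*y"] real_of_int_floor_add_one_gt[of "2^n*y"] by linarith
    show ?thesis unfolding e abs_divide using f p by (simp add: divide_right_mono)
  qed
  have l: "(\<lambda>n. 1 / (2::real)^n) \<longlonglongrightarrow> 0"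
    by (simp add: LIMSEQ_divide_realpow_zero)
  have b': "\<forall>n. norm (real_of_int \<lfloor>2^n * y\<rfloor> / 2^n - y) \<le> 1 / 2^n"
    using b by simp
  have "(\<lambda>n. real_of_int \<lfloor>2^n * y\<rfloor> / 2^n - y) \<longlonglongrightarrow> 0"
    by (rule Lim_null_comparison[OF always_eventually[OF b'] l])
  then show ?thesis by (rule LIM_zero_cancel)
qed

lemma carath_meas:
  fixes L :: "'a::euclidean_space \<Rightarrow> 'a \<Rightarrow> real" and F :: "'a \<Rightarrow> 'a"
  assumes Lm: "\<And>p. (\<lambda>x. L p x) \<in> borel_measurable lebesgue"
    and Lc: "\<And>x. continuous_on UNIV (\<lambda>p. L p x)"
    and F: "F \<in> borel_measurable lebesgue"
  shows "(\<lambda>x. L (F x) x) \<in> borel_measurable lebesgue"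
proof (rule borel_measurable_LIMSEQ_metric)
  define I where "I = (Basis::'a set) \<rightarrow>\<^sub>E (UNIV::int set)"
  have cI: "countable I" unfolding I_def by (intro countable_PiE) auto
  define g where "g n x = restrict (\<lambda>i. \<lfloor>2^n * (F x \<bullet> i)\<rfloor>) (Basis::'a set)" for n :: nat and x
  define h where "h n k x = L (\<Sum>i\<in>Basis. (real_of_int (k i) / 2^n) *\<^sub>R i) x" for n :: nat and k :: "'a \<Rightarrow> int" and x
  fix n :: nat
  show "(\<lambda>x. L (\<Sum>i\<in>Basis. (real_of_int \<lfloor>2^n * (F x \<bullet> i)\<rfloor> / 2^n) *\<^sub>R i) x) \<in> borel_measurable lebesgue"
  proof -
    have gm: "g n \<in> measurable lebesgue (count_space I)"
    proof (subst measurable_count_space_eq_countable[OF cI], intro conjI ballI)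
      show "g n \<in> space lebesgue \<rightarrow> I" by (auto simp: g_def I_def)
      fix k assume "k \<in> I"
      have "g n -` {k} \<inter> space lebesgue = {x. \<forall>i\<in>Basis. \<lfloor>2^n * (F x \<bullet> i)\<rfloor> = k i}"
        using \<open>k \<in> I\<close> by (auto simp: g_def I_def fun_eq_iff PiE_def extensional_def)
      also have "\<dots> = (\<Inter>i\<in>Basis. (\<lambda>x. \<lfloor>2^n * (F x \<bullet> i)\<rfloor>) -` {k i} \<inter> space lebesgue)"
        by auto
      also have "\<dots> \<in> sets lebesgue"
      proof (rule sets.finite_INT)
        fix i :: 'a assume "i \<in> Basis"
        have "(\<lambda>x. \<lfloor>2^n * (F x \<bullet> i)\<rfloor>) \<in> measurable lebesgue (count_space UNIV)"
          using F by measurable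
        then show "(\<lambda>x. \<lfloor>2^n * (F x \<bullet> i)\<rfloor>) -` {k i} \<inter> space lebesgue \<in> sets lebesgue"
          by (simp add: measurable_count_space_eq2_countable)
      qed auto
      finally show "g n -` {k} \<inter> space lebesgue \<in> sets lebesgue" .
    qed
    have "(\<lambda>x. h n (g n x) x) \<in> borel_measurable lebesgue"
      by (rule measurable_compose_countable'[OF _ gm cI]) (auto simp: h_def Lm)
    moreover have "h n (g n x) x = L (\<Sum>i\<in>Basis. (real_of_int \<lfloor>2^n * (F x \<bullet> i)\<rfloor> / 2^n) *\<^sub>R i) x" for x
      unfolding h_def g_def by (intro arg_cong2[where f=L] sum.cong refl) auto
    ultimately show ?thesis by simp
  qed
next
  fix x :: 'a
  have "(\<lambda>n. \<Sum>i\<in>Basis. (real_of_int \<lfloor>2^n * (F x \<bullet> i)\<rfloor> / 2^n) *\<^sub>R i) \<longlonglongrightarrow> (\<Sum>i\<in>Basis. (F x \<bullet> i) *\<^sub>R i)"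
    by (intro tendsto_sum tendsto_scaleR floor_approx_lim tendsto_const)
  then have lim: "(\<lambda>n. \<Sum>i\<in>Basis. (real_of_int \<lfloor>2^n * (F x \<bullet> i)\<rfloor> / 2^n) *\<^sub>R i) \<longlonglongrightarrow> F x"
    by (simp add: euclidean_representation)
  have cont: "isCont (\<lambda>p. L p x) (F x)" using Lc[of x] by (simp add: continuous_on_eq_continuous_at)
  show "(\<lambda>n. L (\<Sum>i\<in>Basis. (real_of_int \<lfloor>2^n * (F x \<bullet> i)\<rfloor> / 2^n) *\<^sub>R i) x) \<longlonglongrightarrow> L (F x) x"
    using isCont_tendsto_compose[OF cont lim] .
qed



lemma cont_bounded_compact_supp:
  fixes f :: "'a::euclidean_space \<Rightarrow> real"
  assumes "continuous_on UNIV f" "compact S" "\<And>x. x \<notin> S \<Longrightarrow> f x = 0"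
  shows "\<exists>B. \<forall>x. \<bar>f x\<bar> \<le> B"
proof -
  have "compact (f ` S)" using assms(1,2) continuous_on_subset compact_continuous_image by blast
  then obtain a where a: "\<forall>y\<in>f ` S. norm y \<le> a" using compact_imp_bounded bounded_iff by metis
  have "\<bar>f x\<bar> \<le> max a 0" for x
    using a assms(3)[of x] by (cases "x \<in> S") auto
  then show ?thesis by blast
qed

lemma test_fun_props:
  fixes \<phi> :: "'a::euclidean_space \<Rightarrow> real"
  assumes t: "test_fun U \<phi>" and d: "\<And>x. (\<phi> has_derivative \<phi>' x) (at x)" and i: "i \<in> Basis"
  shows "continuous_on UNIV \<phi>" "continuous_on UNIV (\<lambda>x. \<phi>' x i)"
    "\<exists>B. \<forall>x. \<bar>\<phi> x\<bar> \<le> B" "\<exists>B. \<forall>x. \<bar>\<phi>' x i\<bar> \<le> B"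
proof -
  define S where "S = closure {x. \<phi> x \<noteq> 0}"
  have cS: "compact S" and sm: "smooth_fun \<phi>" using t unfolding test_fun_def S_def by auto
  obtain F where F: "\<phi> \<in> F" "\<forall>g\<in>F. \<exists>G. (\<forall>x. (g has_derivative G x) (at x)) \<and> (\<forall>i\<in>Basis. (\<lambda>x. G x i) \<in> F)"
    using sm unfolding smooth_fun_def by blast
  obtain G where G: "\<And>x. (\<phi> has_derivative G x) (at x)" "(\<lambda>x. G x i) \<in> F"
    using F i by blast
  have eq: "\<phi>' x = G x" for x using has_derivative_unique[OF d G(1)] .
  obtain H where H: "\<And>x. ((\<lambda>x. G x i) has_derivative H x) (at x)" using F G(2) by blast
  show c2: "continuous_on UNIV (\<lambda>x. \<phi>' x i)"
    unfolding eq using H has_derivative_continuous continuous_at_imp_continuous_on by blast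
  show c1: "continuous_on UNIV \<phi>"
    using d has_derivative_continuous continuous_at_imp_continuous_on by blast
  have z1: "\<phi> x = 0" if "x \<notin> S" for x
  proof (rule ccontr)
    assume "\<phi> x \<noteq> 0"
    then have "x \<in> {x. \<phi> x \<noteq> 0}" by simp
    then have "x \<in> S" unfolding S_def using closure_subset by (rule subsetD[rotated])
    then show False using that by contradiction
  qed
  have oS: "open (- S)" using compact_imp_closed[OF cS] by (simp add: open_Compl)
  have z2: "\<phi>' x i = 0" if xS: "x \<notin> S" for x
  proof -
    have "((\<lambda>_. 0::real) has_derivative (\<lambda>_. 0)) (at x)" by simp
    then have "(\<phi> has_derivative (\<lambda>_. 0)) (at x)"
    proof (rule has_derivative_transform_within_open[where s="- S"])
      show "open (- S)" by (rule oS)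
      show "x \<in> - S" using xS by simp
      show "0 = \<phi> y" if "y \<in> - S" for y using z1[of y] that by simp
    qed
    then have "\<phi>' x = (\<lambda>_. 0)" by (rule has_derivative_unique[OF d[of x]])
    then show ?thesis by simp
  qed
  show "\<exists>B. \<forall>x. \<bar>\<phi> x\<bar> \<le> B" using cont_bounded_compact_supp[OF c1 cS z1] .
  show "\<exists>B. \<forall>x. \<bar>\<phi>' x i\<bar> \<le> B" using cont_bounded_compact_supp[OF c2 cS z2] .
qed



lemma borel_leb: "(f::'a::euclidean_space\<Rightarrow>'b::euclidean_space) \<in> borel_measurable borel \<Longrightarrow> f \<in> borel_measurable lebesgue"
  by (simp add: measurable_completion lborel_def[symmetric] measurable_lborel1)

lemma sbm_comp:
  fixes f :: "'a::euclidean_space \<Rightarrow> 'b::euclidean_space" and g :: "'b \<Rightarrow> 'c::euclidean_space"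
  assumes "set_borel_measurable lebesgue U f" "g \<in> borel_measurable borel" "g 0 = 0"
  shows "set_borel_measurable lebesgue U (\<lambda>x. g (f x))"
proof -
  have "(\<lambda>x. indicator U x *\<^sub>R g (f x)) = (\<lambda>x. g (indicator U x *\<^sub>R f x))"
    using assms(3) by (auto simp: fun_eq_iff indicator_def)
  moreover have "(\<lambda>x. g (indicator U x *\<^sub>R f x)) \<in> borel_measurable lebesgue"
    using assms(1,2) unfolding set_borel_measurable_def by measurable
  ultimately show ?thesis unfolding set_borel_measurable_def by simp
qed

lemma sbm_lin:
  fixes f g :: "'a::euclidean_space \<Rightarrow> 'b::euclidean_space"
  assumes "set_borel_measurable lebesgue U f" "set_borel_measurable lebesgue U g"
  shows "set_borel_measurable lebesgue U (\<lambda>x. a *\<^sub>R f x - g x)"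
proof -
  have "(\<lambda>x. indicator U x *\<^sub>R (a *\<^sub>R f x - g x)) = (\<lambda>x. a *\<^sub>R (indicator U x *\<^sub>R f x) - indicator U x *\<^sub>R g x)"
    by (auto simp: fun_eq_iff indicator_def)
  moreover have "(\<lambda>x. a *\<^sub>R (indicator U x *\<^sub>R f x) - indicator U x *\<^sub>R g x) \<in> borel_measurable lebesgue"
    using assms unfolding set_borel_measurable_def by measurable
  ultimately show ?thesis unfolding set_borel_measurable_def by simp
qed

lemma si_const1:
  assumes "bounded U" "open U"
  shows "set_integrable lebesgue (U::'a::euclidean_space set) (\<lambda>x. 1::real)"
proof -
  have "U \<in> lmeasurable" using assms by (intro bounded_set_imp_lmeasurable) auto
  then have "integrable lebesgue (indicator U :: 'a \<Rightarrow> real)"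
    by (intro integrable_real_indicator) (auto simp: fmeasurable_def)
  then show ?thesis unfolding set_integrable_def by simp
qed

lemma abs_le_1sq: "\<bar>y::real\<bar> \<le> 1 + y\<^sup>2"
proof -
  have "0 \<le> (\<bar>y\<bar> - 1)\<^sup>2" by simp
  also have "(\<bar>y\<bar> - 1)\<^sup>2 = y\<^sup>2 - 2*\<bar>y\<bar> + 1" by (simp add: power2_eq_square algebra_simps)
  finally show ?thesis by simp
qed

lemma si_prod_bounded:
  fixes f h :: "'a::euclidean_space \<Rightarrow> real"
  assumes U: "bounded U" "open U"
    and f: "set_borel_measurable lebesgue U f" "set_integrable lebesgue U (\<lambda>x. (f x)\<^sup>2)"
    and h: "h \<in> borel_measurable lebesgue" "\<And>x. \<bar>h x\<bar> \<le> B"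
  shows "set_integrable lebesgue U (\<lambda>x. f x * h x)"
proof (rule set_integrable_bound[where f="\<lambda>x. \<bar>B\<bar> * (1 + (f x)\<^sup>2)"])
  show "set_integrable lebesgue U (\<lambda>x. \<bar>B\<bar> * (1 + (f x)\<^sup>2))"
    using si_const1[OF U] f(2) by (intro set_integrable_mult_right set_integral_add) auto
  have "(\<lambda>x. indicator U x *\<^sub>R (f x * h x)) = (\<lambda>x. (indicator U x *\<^sub>R f x) * h x)"
    by (auto simp: fun_eq_iff indicator_def)
  then show "set_borel_measurable lebesgue U (\<lambda>x. f x * h x)"
    using f(1) h(1) unfolding set_borel_measurable_def by simp
  show "AE x in lebesgue. x \<in> U \<longrightarrow> norm (f x * h x) \<le> norm (\<bar>B\<bar> * (1 + (f x)\<^sup>2))"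
  proof (intro AE_I2 impI)
    fix x
    have a: "\<bar>f x\<bar> \<le> 1 + (f x)\<^sup>2"
      using abs_le_1sq[of "f x"] .
    have "norm (f x * h x) = \<bar>f x\<bar> * \<bar>h x\<bar>" by (simp add: abs_mult)
    also have "\<dots> \<le> (1 + (f x)\<^sup>2) * \<bar>B\<bar>"
      using h(2)[of x] a by (intro mult_mono) auto
    finally show "norm (f x * h x) \<le> norm (\<bar>B\<bar> * (1 + (f x)\<^sup>2))"
      by (simp add: abs_mult mult.commute)
  qed
qed



lemma comp_meas_sq:
  fixes f :: "'a::euclidean_space \<Rightarrow> 'b::euclidean_space" and i :: 'b
  assumes "set_borel_measurable lebesgue U f" "set_integrable lebesgue U (\<lambda>x. (norm (f x))\<^sup>2)"
  shows "set_borel_measurable lebesgue U (\<lambda>x. f x \<bullet> i)" and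
    "i \<in> Basis \<Longrightarrow> set_integrable lebesgue U (\<lambda>x. (f x \<bullet> i)\<^sup>2)"
proof -
  show m: "set_borel_measurable lebesgue U (\<lambda>x. f x \<bullet> i)"
    by (rule sbm_comp[OF assms(1), where g="\<lambda>v. v \<bullet> i"]) auto
  assume i: "i \<in> Basis"
  show "set_integrable lebesgue U (\<lambda>x. (f x \<bullet> i)\<^sup>2)"
  proof (rule set_integrable_bound[OF assms(2)])
    show "set_borel_measurable lebesgue U (\<lambda>x. (f x \<bullet> i)\<^sup>2)"
      by (rule sbm_comp[OF m, where g="\<lambda>v. v\<^sup>2"]) auto
    show "AE x in lebesgue. x \<in> U \<longrightarrow> norm ((f x \<bullet> i)\<^sup>2) \<le> norm ((norm (f x))\<^sup>2)"
    proof (intro AE_I2 impI)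
      fix x
      have "\<bar>f x \<bullet> i\<bar> \<le> norm (f x)" using Basis_le_norm[OF i] .
      then have "\<bar>f x \<bullet> i\<bar>\<^sup>2 \<le> (norm (f x))\<^sup>2" by (intro power_mono) auto
      then show "norm ((f x \<bullet> i)\<^sup>2) \<le> norm ((norm (f x))\<^sup>2)" by simp
    qed
  qed
qed

lemma H1_lin:
  fixes w \<xi> :: "'a::euclidean_space \<Rightarrow> real" and Dw D\<xi> :: "'a \<Rightarrow> 'a"
  assumes U: "bounded U" "open U" and Hw: "H1 U w Dw" and Hx: "H1 U \<xi> D\<xi>"
  shows "H1 U (\<lambda>x. 2 * \<xi> x - w x) (\<lambda>x. 2 *\<^sub>R D\<xi> x - Dw x)"
proof -
  from Hw have w1: "set_borel_measurable lebesgue U w" and w2: "set_integrable lebesgue U (\<lambda>x. (w x)\<^sup>2)"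
    and w3: "set_borel_measurable lebesgue U Dw" and w4: "set_integrable lebesgue U (\<lambda>x. (norm (Dw x))\<^sup>2)"
    and w5: "\<And>(\<phi>::'a\<Rightarrow>real) \<phi>' i. test_fun U \<phi> \<Longrightarrow> (\<forall>x. (\<phi> has_derivative \<phi>' x) (at x)) \<Longrightarrow> i \<in> Basis \<Longrightarrow>
        (LINT x:U|lebesgue. w x * \<phi>' x i) = - (LINT x:U|lebesgue. (Dw x \<bullet> i) * \<phi> x)"
    unfolding H1_def by blast+
  from Hx have x1: "set_borel_measurable lebesgue U \<xi>" and x2: "set_integrable lebesgue U (\<lambda>x. (\<xi> x)\<^sup>2)"
    and x3: "set_borel_measurable lebesgue U D\<xi>" and x4: "set_integrable lebesgue U (\<lambda>x. (norm (D\<xi> x))\<^sup>2)"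
    and x5: "\<And>(\<phi>::'a\<Rightarrow>real) \<phi>' i. test_fun U \<phi> \<Longrightarrow> (\<forall>x. (\<phi> has_derivative \<phi>' x) (at x)) \<Longrightarrow> i \<in> Basis \<Longrightarrow>
        (LINT x:U|lebesgue. \<xi> x * \<phi>' x i) = - (LINT x:U|lebesgue. (D\<xi> x \<bullet> i) * \<phi> x)"
    unfolding H1_def by blast+
  have m1: "set_borel_measurable lebesgue U (\<lambda>x. 2 * \<xi> x - w x)"
    using sbm_lin[OF x1 w1, of 2] by simp
  have m2: "set_borel_measurable lebesgue U (\<lambda>x. 2 *\<^sub>R D\<xi> x - Dw x)"
    using sbm_lin[OF x3 w3, of 2] by simp
  have i1: "set_integrable lebesgue U (\<lambda>x. (2 * \<xi> x - w x)\<^sup>2)"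
  proof (rule set_integrable_bound[where f="\<lambda>x. 8 * (\<xi> x)\<^sup>2 + 2 * (w x)\<^sup>2"])
    show "set_integrable lebesgue U (\<lambda>x. 8 * (\<xi> x)\<^sup>2 + 2 * (w x)\<^sup>2)"
      using x2 w2 by (intro set_integral_add set_integrable_mult_right) auto
    show "set_borel_measurable lebesgue U (\<lambda>x. (2 * \<xi> x - w x)\<^sup>2)"
      by (rule sbm_comp[OF m1, where g="\<lambda>v. v\<^sup>2"]) auto
    show "AE x in lebesgue. x \<in> U \<longrightarrow> norm ((2 * \<xi> x - w x)\<^sup>2) \<le> norm (8 * (\<xi> x)\<^sup>2 + 2 * (w x)\<^sup>2)"
    proof (intro AE_I2 impI)
      fix x
      have "0 \<le> (2 * \<xi> x + w x)\<^sup>2" by simp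
      then have "(2 * \<xi> x - w x)\<^sup>2 \<le> 8 * (\<xi> x)\<^sup>2 + 2 * (w x)\<^sup>2"
        by (simp add: power2_eq_square algebra_simps)
      moreover have "0 \<le> 8 * (\<xi> x)\<^sup>2 + 2 * (w x)\<^sup>2" by simp
      ultimately show "norm ((2 * \<xi> x - w x)\<^sup>2) \<le> norm (8 * (\<xi> x)\<^sup>2 + 2 * (w x)\<^sup>2)"
        by simp
    qed
  qed
  have i2: "set_integrable lebesgue U (\<lambda>x. (norm (2 *\<^sub>R D\<xi> x - Dw x))\<^sup>2)"
  proof (rule set_integrable_bound[where f="\<lambda>x. 8 * (norm (D\<xi> x))\<^sup>2 + 2 * (norm (Dw x))\<^sup>2"])
    show "set_integrable lebesgue U (\<lambda>x. 8 * (norm (D\<xi> x))\<^sup>2 + 2 * (norm (Dw x))\<^sup>2)"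
      using x4 w4 by (intro set_integral_add set_integrable_mult_right) auto
    show "set_borel_measurable lebesgue U (\<lambda>x. (norm (2 *\<^sub>R D\<xi> x - Dw x))\<^sup>2)"
      by (rule sbm_comp[OF m2, where g="\<lambda>v. (norm v)\<^sup>2"]) auto
    show "AE x in lebesgue. x \<in> U \<longrightarrow> norm ((norm (2 *\<^sub>R D\<xi> x - Dw x))\<^sup>2) \<le> norm (8 * (norm (D\<xi> x))\<^sup>2 + 2 * (norm (Dw x))\<^sup>2)"
    proof (intro AE_I2 impI)
      fix x
      have t: "norm (2 *\<^sub>R D\<xi> x - Dw x) \<le> 2 * norm (D\<xi> x) + norm (Dw x)"
        using norm_triangle_ineq4[of "2 *\<^sub>R D\<xi> x" "Dw x"] by simp
      have "(norm (2 *\<^sub>R D\<xi> x - Dw x))\<^sup>2 \<le> (2 * norm (D\<xi> x) + norm (Dw x))\<^sup>2"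
        using t by (intro power_mono) auto
      also have "\<dots> \<le> 8 * (norm (D\<xi> x))\<^sup>2 + 2 * (norm (Dw x))\<^sup>2"
      proof -
        have "0 \<le> (2 * norm (D\<xi> x) - norm (Dw x))\<^sup>2" by simp
        then show ?thesis by (simp add: power2_eq_square algebra_simps)
      qed
      finally show "norm ((norm (2 *\<^sub>R D\<xi> x - Dw x))\<^sup>2) \<le> norm (8 * (norm (D\<xi> x))\<^sup>2 + 2 * (norm (Dw x))\<^sup>2)"
        by simp
    qed
  qed
  have i3: "(LINT x:U|lebesgue. (2 * \<xi> x - w x) * \<phi>' x i) = - (LINT x:U|lebesgue. ((2 *\<^sub>R D\<xi> x - Dw x) \<bullet> i) * \<phi> x)"
    if t: "test_fun U \<phi>" and d: "\<forall>x. (\<phi> has_derivative \<phi>' x) (at x)" and i: "i \<in> Basis" for \<phi> :: "'a \<Rightarrow> real" and \<phi>' i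
  proof -
    note P = test_fun_props[OF t d[rule_format] i]
    obtain B1 where B1: "\<And>x. \<bar>\<phi> x\<bar> \<le> B1" using P(3) by blast
    obtain B2 where B2: "\<And>x. \<bar>\<phi>' x i\<bar> \<le> B2" using P(4) by blast
    have mphi: "\<phi> \<in> borel_measurable lebesgue" using P(1) by (intro borel_leb borel_measurable_continuous_onI)
    have mphi': "(\<lambda>x. \<phi>' x i) \<in> borel_measurable lebesgue" using P(2) by (intro borel_leb borel_measurable_continuous_onI)
    have a1: "set_integrable lebesgue U (\<lambda>x. \<xi> x * \<phi>' x i)" by (rule si_prod_bounded[OF U x1 x2 mphi' B2])
    have a2: "set_integrable lebesgue U (\<lambda>x. w x * \<phi>' x i)" by (rule si_prod_bounded[OF U w1 w2 mphi' B2])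
    have a3: "set_integrable lebesgue U (\<lambda>x. (D\<xi> x \<bullet> i) * \<phi> x)"
      by (rule si_prod_bounded[OF U comp_meas_sq(1)[OF x3 x4, where i=i] comp_meas_sq(2)[OF x3 x4 i] mphi B1])
    have a4: "set_integrable lebesgue U (\<lambda>x. (Dw x \<bullet> i) * \<phi> x)"
      by (rule si_prod_bounded[OF U comp_meas_sq(1)[OF w3 w4, where i=i] comp_meas_sq(2)[OF w3 w4 i] mphi B1])
    have "(LINT x:U|lebesgue. (2 * \<xi> x - w x) * \<phi>' x i) = (LINT x:U|lebesgue. 2 * (\<xi> x * \<phi>' x i) - w x * \<phi>' x i)"
      by (simp add: left_diff_distrib mult.assoc)
    also have "\<dots> = 2 * (LINT x:U|lebesgue. \<xi> x * \<phi>' x i) - (LINT x:U|lebesgue. w x * \<phi>' x i)"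
      using set_integral_diff(2)[OF set_integrable_mult_right[OF a1, of 2] a2] by simp
    also have "\<dots> = - (2 * (LINT x:U|lebesgue. (D\<xi> x \<bullet> i) * \<phi> x) - (LINT x:U|lebesgue. (Dw x \<bullet> i) * \<phi> x))"
      using x5[OF t d i] w5[OF t d i] by simp
    also have "2 * (LINT x:U|lebesgue. (D\<xi> x \<bullet> i) * \<phi> x) - (LINT x:U|lebesgue. (Dw x \<bullet> i) * \<phi> x)
       = (LINT x:U|lebesgue. 2 * ((D\<xi> x \<bullet> i) * \<phi> x) - (Dw x \<bullet> i) * \<phi> x)"
      using set_integral_diff(2)[OF set_integrable_mult_right[OF a3, of 2] a4] by simp
    also have "\<dots> = (LINT x:U|lebesgue. ((2 *\<^sub>R D\<xi> x - Dw x) \<bullet> i) * \<phi> x)"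
      by (simp add: inner_diff_left left_diff_distrib mult.assoc)
    finally show ?thesis .
  qed
  show ?thesis unfolding H1_def
  proof (intro conjI m1 m2 i1 i2 allI impI ballI)
    fix \<phi> :: "'a \<Rightarrow> real" and \<phi>' and i :: 'a assume a: "test_fun U \<phi> \<and> (\<forall>x. (\<phi> has_derivative \<phi>' x) (at x))" and b: "i \<in> Basis"
    show "(LINT x:U|lebesgue. (2 * \<xi> x - w x) * \<phi>' x i) = - (LINT x:U|lebesgue. ((2 *\<^sub>R D\<xi> x - Dw x) \<bullet> i) * \<phi> x)"
      using i3[of \<phi> \<phi>' i] a b by blast
  qed
qed



theorem lemma2p2:
  fixes \<Lambda> :: real and L :: "'a::euclidean_space \<Rightarrow> 'a \<Rightarrow> real" and q :: 'a
    and U :: "'a set" and w \<xi> :: "'a \<Rightarrow> real" and Dw D\<xi> :: "'a \<Rightarrow> 'a"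
  assumes "DIM('a) \<ge> 2" and "\<Lambda> \<ge> 1" and "L \<in> Omega \<Lambda>"
    and "open U" and "bounded U"
    and "\<exists>v. admissible U q L v \<and> (\<forall>G. admissible U q L G \<longrightarrow>
           avg U (energy_integrand L q v) \<le> avg U (energy_integrand L q G))"
    and "H1 U w Dw" and "H1 U \<xi> D\<xi>"
    and "set_integrable lebesgue U (energy_integrand L q Dw)"
    and "set_integrable lebesgue U (energy_integrand L q D\<xi>)"
  shows "avg U (\<lambda>x. L (Dw x) x - q \<bullet> Dw x)
     \<le> 2 * avg U (\<lambda>x. L (D\<xi> x) x - q \<bullet> D\<xi> x) - mu U q L + 2 * \<Lambda> * avg U (\<lambda>x. (norm (Dw x - D\<xi> x))\<^sup>2)"
proof -
  have Lm: "\<And>p. (\<lambda>x. L p x) \<in> borel_measurable lebesgue" and Lc: "\<And>x. continuous_on UNIV (\<lambda>p. L p x)"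
    and Lcv: "\<And>p1 p2 x. (1/4) * (norm (p1 - p2))\<^sup>2 \<le> (1/2) * L p1 x + (1/2) * L p2 x - L ((1/2) *\<^sub>R p1 + (1/2) *\<^sub>R p2) x
        \<and> (1/2) * L p1 x + (1/2) * L p2 x - L ((1/2) *\<^sub>R p1 + (1/2) *\<^sub>R p2) x \<le> (\<Lambda>/4) * (norm (p1 - p2))\<^sup>2"
    using assms(3) unfolding Omega_def by auto
  define G where "G = (\<lambda>x. 2 *\<^sub>R D\<xi> x - Dw x)"
  define eW where "eW = (\<lambda>x. L (Dw x) x - q \<bullet> Dw x)"
  define eX where "eX = (\<lambda>x. L (D\<xi> x) x - q \<bullet> D\<xi> x)"
  define eG where "eG = (\<lambda>x. L (G x) x - q \<bullet> G x)"
  define N where "N = (\<lambda>x. (norm (Dw x - D\<xi> x))\<^sup>2)"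
  have H1G: "H1 U (\<lambda>x. 2 * \<xi> x - w x) G" unfolding G_def by (rule H1_lin[OF assms(5,4,7,8)])
  have ptw: "eW x \<le> 2 * eX x - eG x + 2 * \<Lambda> * N x \<and> 2 * eX x - eW x \<le> eG x" for x
  proof -
    have mid: "(1/2) *\<^sub>R Dw x + (1/2) *\<^sub>R G x = D\<xi> x"
      unfolding G_def by (simp add: scaleR_diff_right)
    have dd: "Dw x - G x = 2 *\<^sub>R (Dw x - D\<xi> x)"
      unfolding G_def by (simp add: scaleR_diff_right algebra_simps scaleR_2)
    have nrm: "(norm (Dw x - G x))\<^sup>2 = 4 * N x"
      unfolding dd N_def by (simp add: power_mult_distrib)
    have qG: "q \<bullet> G x = 2 * (q \<bullet> D\<xi> x) - q \<bullet> Dw x"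
      unfolding G_def by (simp add: inner_diff_right)
    have c: "(1/4) * (4 * N x) \<le> (1/2) * L (Dw x) x + (1/2) * L (G x) x - L (D\<xi> x) x"
      "(1/2) * L (Dw x) x + (1/2) * L (G x) x - L (D\<xi> x) x \<le> (\<Lambda>/4) * (4 * N x)"
      using Lcv[of "Dw x" "G x" x] unfolding mid nrm by auto
    have N0: "0 \<le> N x" unfolding N_def by simp
    show ?thesis unfolding eW_def eX_def eG_def qG using c N0 by (simp add: field_simps)
  qed
  from assms(7) have mDw: "set_borel_measurable lebesgue U Dw" and sDw: "set_integrable lebesgue U (\<lambda>x. (norm (Dw x))\<^sup>2)"
    unfolding H1_def by auto
  from assms(8) have mDx: "set_borel_measurable lebesgue U D\<xi>" and sDx: "set_integrable lebesgue U (\<lambda>x. (norm (D\<xi> x))\<^sup>2)"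
    unfolding H1_def by auto
  from H1G have mG: "set_borel_measurable lebesgue U G" unfolding H1_def by auto
  have iW: "set_integrable lebesgue U eW" using assms(9) unfolding eW_def energy_integrand_def .
  have iX: "set_integrable lebesgue U eX" using assms(10) unfolding eX_def energy_integrand_def .
  have mN: "set_borel_measurable lebesgue U N"
  proof -
    have "set_borel_measurable lebesgue U (\<lambda>x. 1 *\<^sub>R Dw x - D\<xi> x)" by (rule sbm_lin[OF mDw mDx])
    then have "set_borel_measurable lebesgue U (\<lambda>x. Dw x - D\<xi> x)" by simp
    then show ?thesis unfolding N_def by (rule sbm_comp[where g="\<lambda>v. (norm v)\<^sup>2"]) auto
  qed
  have iN: "set_integrable lebesgue U N"
  proof (rule set_integrable_bound[where f="\<lambda>x. 2 * (norm (Dw x))\<^sup>2 + 2 * (norm (D\<xi> x))\<^sup>2"])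
    show "set_integrable lebesgue U (\<lambda>x. 2 * (norm (Dw x))\<^sup>2 + 2 * (norm (D\<xi> x))\<^sup>2)"
      using sDw sDx by (intro set_integral_add set_integrable_mult_right) auto
    show "set_borel_measurable lebesgue U N" by (rule mN)
    show "AE x in lebesgue. x \<in> U \<longrightarrow> norm (N x) \<le> norm (2 * (norm (Dw x))\<^sup>2 + 2 * (norm (D\<xi> x))\<^sup>2)"
    proof (intro AE_I2 impI)
      fix x
      have t: "norm (Dw x - D\<xi> x) \<le> norm (Dw x) + norm (D\<xi> x)" by (rule norm_triangle_ineq4)
      have "N x \<le> (norm (Dw x) + norm (D\<xi> x))\<^sup>2" unfolding N_def using t by (intro power_mono) auto
      also have "\<dots> \<le> 2 * (norm (Dw x))\<^sup>2 + 2 * (norm (D\<xi> x))\<^sup>2"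
      proof -
        have "0 \<le> (norm (Dw x) - norm (D\<xi> x))\<^sup>2" by simp
        then show ?thesis by (simp add: power2_eq_square algebra_simps)
      qed
      finally have "N x \<le> 2 * (norm (Dw x))\<^sup>2 + 2 * (norm (D\<xi> x))\<^sup>2" .
      moreover have "0 \<le> N x" unfolding N_def by simp
      ultimately show "norm (N x) \<le> norm (2 * (norm (Dw x))\<^sup>2 + 2 * (norm (D\<xi> x))\<^sup>2)" by simp
    qed
  qed
  have mEG: "set_borel_measurable lebesgue U eG"
  proof -
    define G' where "G' = (\<lambda>x. indicator U x *\<^sub>R G x)"
    have G'm: "G' \<in> borel_measurable lebesgue" using mG unfolding G'_def set_borel_measurable_def .
    have LG: "(\<lambda>x. L (G' x) x) \<in> borel_measurable lebesgue" by (rule carath_meas[OF Lm Lc G'm])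
    have Um: "U \<in> sets lebesgue" using assms(4) by auto
    have im: "(indicator U :: 'a \<Rightarrow> real) \<in> borel_measurable lebesgue" using Um by simp
    have eq: "(\<lambda>x. indicator U x *\<^sub>R eG x) = (\<lambda>x. indicator U x * L (G' x) x - q \<bullet> G' x)"
      by (auto simp: fun_eq_iff indicator_def eG_def G'_def)
    have "(\<lambda>x. indicator U x * L (G' x) x - q \<bullet> G' x) \<in> borel_measurable lebesgue"
      using im LG G'm by measurable
    then show ?thesis unfolding set_borel_measurable_def eq .
  qed
  have iG: "set_integrable lebesgue U eG"
  proof (rule set_integrable_bound[where f="\<lambda>x. \<bar>2 * eX x - eW x\<bar> + \<bar>2 * eX x - eW x + 2 * \<Lambda> * N x\<bar>"])
    show "set_integrable lebesgue U (\<lambda>x. \<bar>2 * eX x - eW x\<bar> + \<bar>2 * eX x - eW x + 2 * \<Lambda> * N x\<bar>)"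
      using iW iX iN
      by (intro set_integral_add set_integrable_abs set_integral_diff set_integrable_mult_right) auto
    show "set_borel_measurable lebesgue U eG" by (rule mEG)
    show "AE x in lebesgue. x \<in> U \<longrightarrow> norm (eG x) \<le> norm (\<bar>2 * eX x - eW x\<bar> + \<bar>2 * eX x - eW x + 2 * \<Lambda> * N x\<bar>)"
    proof (intro AE_I2 impI)
      fix x
      have "eG x \<le> 2 * eX x - eW x + 2 * \<Lambda> * N x" "2 * eX x - eW x \<le> eG x" using ptw[of x] by linarith+
      then show "norm (eG x) \<le> norm (\<bar>2 * eX x - eW x\<bar> + \<bar>2 * eX x - eW x + 2 * \<Lambda> * N x\<bar>)"
        by simp
    qed
  qed
  have admG: "admissible U q L G"
    unfolding admissible_def using H1G iG unfolding eG_def energy_integrand_def by blast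
  have muG: "mu U q L \<le> avg U eG"
  proof -
    obtain v where v: "admissible U q L v" "\<And>G. admissible U q L G \<Longrightarrow> avg U (energy_integrand L q v) \<le> avg U (energy_integrand L q G)"
      using assms(6) by blast
    have bdd: "bdd_below {avg U (energy_integrand L q G) | G. admissible U q L G}"
      by (rule bdd_belowI[where m="avg U (energy_integrand L q v)"]) (auto intro: v(2))
    have "avg U eG \<in> {avg U (energy_integrand L q G) | G. admissible U q L G}"
      using admG unfolding eG_def energy_integrand_def by blast
    then show ?thesis unfolding mu_def by (rule cInf_lower[OF _ bdd])
  qed
  have iR: "set_integrable lebesgue U (\<lambda>x. 2 * eX x - eG x + 2 * \<Lambda> * N x)"
    using iX iG iN by (intro set_integral_add set_integral_diff set_integrable_mult_right) auto
  have "(LINT x:U|lebesgue. eW x) \<le> (LINT x:U|lebesgue. 2 * eX x - eG x + 2 * \<Lambda> * N x)"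
    using iW iR ptw by (intro set_integral_mono) auto
  also have "\<dots> = 2 * (LINT x:U|lebesgue. eX x) - (LINT x:U|lebesgue. eG x) + 2 * \<Lambda> * (LINT x:U|lebesgue. N x)"
  proof -
    have a: "set_integrable lebesgue U (\<lambda>x. 2 * eX x - eG x)"
      using iX iG by (intro set_integral_diff set_integrable_mult_right) auto
    have b: "set_integrable lebesgue U (\<lambda>x. 2 * \<Lambda> * N x)"
      using iN by (intro set_integrable_mult_right) auto
    have c: "set_integrable lebesgue U (\<lambda>x. 2 * eX x)"
      using iX by (intro set_integrable_mult_right) auto
    show ?thesis
      using set_integral_add(2)[OF a b] set_integral_diff(2)[OF c iG] by simp
  qed
  finally have I: "(LINT x:U|lebesgue. eW x) \<le> 2 * (LINT x:U|lebesgue. eX x) - (LINT x:U|lebesgue. eG x) + 2 * \<Lambda> * (LINT x:U|lebesgue. N x)" .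
  have m0: "0 \<le> measure lebesgue U" by simp
  have "avg U eW \<le> (2 * (LINT x:U|lebesgue. eX x) - (LINT x:U|lebesgue. eG x) + 2 * \<Lambda> * (LINT x:U|lebesgue. N x)) / measure lebesgue U"
    unfolding avg_def using I m0 by (rule divide_right_mono)
  also have "\<dots> = 2 * avg U eX - avg U eG + 2 * \<Lambda> * avg U N"
    unfolding avg_def by (simp add: add_divide_distrib diff_divide_distrib)
  finally have "avg U eW \<le> 2 * avg U eX - avg U eG + 2 * \<Lambda> * avg U N" .
  then have "avg U eW \<le> 2 * avg U eX - mu U q L + 2 * \<Lambda> * avg U N" using muG by linarith
  then show ?thesis unfolding eW_def eX_def N_def .
qed

end
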